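(* Let $S$ be a square-free semigroup, $D$ a division ring, $(\alpha,\xi)\in Z^2(S,D^* )$ a normal 2-cocycle and $R=D^{\alpha}_{\xi}S$. Let $\Phi:\mathrm{Out}\,R\to\mathrm{Aut}(S)$ be the homomorphism described below. Then $\mathrm{Im}\,\Phi=\mathrm{Stab}_{[\alpha,\xi]}(\mathrm{Aut}\,S)=\{\phi\in\mathrm{Aut}(S):[\alpha,\xi]=[\alpha^{\phi},\xi^{\phi}]\}$.
   Context: $D$ is a division ring, $D^*$ its group of units, $\mathrm{Aut}(D)$ its ring automorphism group, $\rho_d(x)=dxd^{-1}$. A square-free semigroup is a semigroup $S$ (product $s\cdot t$) with zero $\theta$ and a finite set $E\subseteq S$ of nonzero pairwise orthogonal idempotents with $S=\bigcup_{e,f\in E}e\cdot S\cdot f$ and $|e\cdot S\cdot f\setminus\{\theta\}|\le 1$; $S^*=S\setminus\{\theta\}$, each $s\in S^*$ equals $e\cdot s\cdot f$ for unique $e,f\in E$; $\mathrm{Aut}(S)$ is the semigroup automorphism group. $S^{<0>}=E$, $S^{<n>}=\{(s_1,\dots,s_n)\in S^n:s_1\cdots s_n\ne\theta\}$, $F^n(S,G)$ the group of functions $S^{<n>}\to G$; $\alpha_s=\alpha(s)$, $\mu_e=\mu(e)$. A 2-cocycle is $(\alpha,\xi)\in F^1(S,\mathrm{Aut}(D))\times F^2(S,D^* )$ with $\alpha_s(\xi(t,u))\xi(s,t\cdot u)=\xi(s,t)\xi(s\cdot t,u)$ on $S^{<3>}$ and $\alpha_s\circ\alpha_t=\rho_{\xi(s,t)}\circ\alpha_{s\cdot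 t}$ on $S^{<2>}$; $Z^2(S,D^* )$ is their set; normal means $\alpha_e=1_D$, $\xi(e,e)=1$ for $e\in E$. $F^0(S,\mathrm{Aut}(D))\ltimes F^1(S,D^* )$ acts on $Z^2(S,D^* )$ by $(\mu,\eta)*(\alpha,\xi)=(\beta,\zeta)$ where for $s=e\cdot s\cdot f$, $t=f\cdot t\cdot g$, $s\cdot t\ne\theta$: $\mu_e\circ\beta_s\circ\mu_f^{-1}=\rho_{\eta(s)}\circ\alpha_s$ and $\mu_e(\zeta(s,t))=\eta(s)\alpha_s(\eta(t))\xi(s,t)\eta(s\cdot t)^{-1}$; $[\alpha,\xi]$ denotes the orbit (thin 2-cohomology class). For $\phi\in\mathrm{Aut}(S)$, $\alpha^{\phi}_s=\alpha_{\phi(s)}$, $\xi^{\phi}(s,t)=\xi(\phi(s),\phi(t))$. $D^{\alpha}_{\xi}S$ is the left $D$-vector space with basis $S^*$, multiplication extended by distributivity from $(d_1s)(d_2t)=d_1\alpha_s(d_2)\xi(s,t)(s\cdot t)$ if $s\cdot t\ne\theta$, $0$ otherwise. $\mathrm{Out}\,R=\mathrm{Aut}\,R/\mathrm{Inn}\,R$. The map $\Phi$: let $\mathrm{Aut}_0R=\{\gamma\in\mathrm{Aut}\,R:\gamma(E)=E\}$. Every coset $(\mathrm{Inn}\,R)\gamma$ contains some $\gamma_0\in\mathrm{Aut}_0R$, and every $\gamma_0\in\mathrm{Aut}_0R$ has the form $\gamma_0(ds)=\mu_e(d)\eta(s)\phi(s)$ ($d\in D$, $s=e\cdot s\in S^*$)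 for some $\mu\in F^0(S,\mathrm{Aut}(D))$, $\eta\in F^1(S,D^* )$, $\phi\in\mathrm{Aut}(S)$, with $\phi$ depending only on the coset; $\Phi((\mathrm{Inn}\,R)\gamma_0)=\phi$ is a group homomorphism. *)

theory Defs
  imports Main
begin

definition eSf :: "('s \<Rightarrow> 's \<Rightarrow> 's) \<Rightarrow> 's set \<Rightarrow> 's \<Rightarrow> 's \<Rightarrow> 's set" where
  "eSf m S e f = {m (m e s) f | s. s \<in> S}"

definition sq_free_sg :: "('s \<Rightarrow> 's \<Rightarrow> 's) \<Rightarrow> 's \<Rightarrow> 's set \<Rightarrow> 's set \<Rightarrow> bool" where
  "sq_free_sg m z E S \<longleftrightarrow>
     (\<forall>a\<in>S. \<forall>b\<in>S. m a b \<in> S) \<and>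
     (\<forall>a\<in>S. \<forall>b\<in>S. \<forall>c\<in>S. m (m a b) c = m a (m b c)) \<and>
     z \<in> S \<and> (\<forall>a\<in>S. m z a = z \<and> m a z = z) \<and>
     finite E \<and> E \<subseteq> S \<and>
     (\<forall>e\<in>E. e \<noteq> z \<and> m e e = e) \<and>
     (\<forall>e\<in>E. \<forall>f\<in>E. e \<noteq> f \<longrightarrow> m e f = z) \<and>
     S = (\<Union>e\<in>E. \<Union>f\<in>E. eSf m S e f) \<and>
     (\<forall>e\<in>E. \<forall>f\<in>E. \<forall>x y. x \<in> eSf m S e f - {z} \<longrightarrow> y \<in> eSf m S e f - {z} \<longrightarrow> x = y)"

definition sg_aut :: "('s \<Rightarrow> 's \<Rightarrow> 's) \<Rightarrow> 's set \<Rightarrow> ('s \<Rightarrow> 's) \<Rightarrow> bool" where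
  "sg_aut m S \<phi> \<longleftrightarrow> bij_betw \<phi> S S \<and> (\<forall>s\<in>S. \<forall>t\<in>S. \<phi> (m s t) = m (\<phi> s) (\<phi> t)) \<and>
     (\<forall>x. x \<notin> S \<longrightarrow> \<phi> x = x)"

definition dr_aut :: "('d::division_ring \<Rightarrow> 'd) \<Rightarrow> bool" where
  "dr_aut \<sigma> \<longleftrightarrow> bij \<sigma> \<and> (\<forall>x y. \<sigma> (x + y) = \<sigma> x + \<sigma> y) \<and> (\<forall>x y. \<sigma> (x * y) = \<sigma> x * \<sigma> y)"

definition rho :: "'d::division_ring \<Rightarrow> 'd \<Rightarrow> 'd" where
  "rho d x = d * x * inverse d"

definition cocycle :: "('s \<Rightarrow> 's \<Rightarrow> 's) \<Rightarrow> 's \<Rightarrow> 's set \<Rightarrow>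
    ('s \<Rightarrow> 'd::division_ring \<Rightarrow> 'd) \<Rightarrow> ('s \<Rightarrow> 's \<Rightarrow> 'd) \<Rightarrow> bool" where
  "cocycle m z S \<alpha> \<xi> \<longleftrightarrow>
     (\<forall>s\<in>S - {z}. dr_aut (\<alpha> s)) \<and>
     (\<forall>s\<in>S. \<forall>t\<in>S. m s t \<noteq> z \<longrightarrow> \<xi> s t \<noteq> 0) \<and>
     (\<forall>s\<in>S. \<forall>t\<in>S. \<forall>u\<in>S. m (m s t) u \<noteq> z \<longrightarrow>
        \<alpha> s (\<xi> t u) * \<xi> s (m t u) = \<xi> s t * \<xi> (m s t) u) \<and>
     (\<forall>s\<in>S. \<forall>t\<in>S. m s t \<noteq> z \<longrightarrow> \<alpha> s \<circ> \<alpha> t = rho (\<xi> s t) \<circ> \<alpha> (m s t))"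

definition normal_cocycle :: "'s set \<Rightarrow> ('s \<Rightarrow> 'd::division_ring \<Rightarrow> 'd) \<Rightarrow> ('s \<Rightarrow> 's \<Rightarrow> 'd) \<Rightarrow> bool" where
  "normal_cocycle E \<alpha> \<xi> \<longleftrightarrow> (\<forall>e\<in>E. \<alpha> e = id \<and> \<xi> e e = 1)"

text \<open>act_eq m z E S \<mu> \<eta> (\<alpha>,\<xi>) (\<beta>,\<zeta>): (\<mu>,\<eta>) * (\<alpha>,\<xi>) = (\<beta>,\<zeta>), where
(\<mu>,\<eta>) ranges over F^0(S,Aut D) x F^1(S,D^*).  The condition
mu_e o beta_s o mu_f^-1 = rho_eta(s) o alpha_s is written equivalently as
mu_e o beta_s = rho_eta(s) o alpha_s o mu_f.\<close>
definition act_eq :: "('s \<Rightarrow> 's \<Rightarrow> 's) \<Rightarrow> 's \<Rightarrow> 's set \<Rightarrow> 's set \<Rightarrow>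
    ('s \<Rightarrow> 'd::division_ring \<Rightarrow> 'd) \<Rightarrow> ('s \<Rightarrow> 'd) \<Rightarrow>
    ('s \<Rightarrow> 'd \<Rightarrow> 'd) \<Rightarrow> ('s \<Rightarrow> 's \<Rightarrow> 'd) \<Rightarrow>
    ('s \<Rightarrow> 'd \<Rightarrow> 'd) \<Rightarrow> ('s \<Rightarrow> 's \<Rightarrow> 'd) \<Rightarrow> bool" where
  "act_eq m z E S \<mu> \<eta> \<alpha> \<xi> \<beta> \<zeta> \<longleftrightarrow>
     (\<forall>s\<in>S - {z}. \<forall>e\<in>E. \<forall>f\<in>E. m (m e s) f = s \<longrightarrow>
        \<mu> e \<circ> \<beta> s = rho (\<eta> s) \<circ> \<alpha> s \<circ> \<mu> f) \<and>
     (\<forall>s\<in>S - {z}. \<forall>t\<in>S - {z}. \<forall>e\<in>E. m e s = s \<longrightarrow> m s t \<noteq> z \<longrightarrow>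
        \<mu> e (\<zeta> s t) = \<eta> s * \<alpha> s (\<eta> t) * \<xi> s t * inverse (\<eta> (m s t)))"

definition group_elt :: "'s \<Rightarrow> 's set \<Rightarrow> 's set \<Rightarrow> ('s \<Rightarrow> 'd::division_ring \<Rightarrow> 'd) \<Rightarrow> ('s \<Rightarrow> 'd) \<Rightarrow> bool" where
  "group_elt z E S \<mu> \<eta> \<longleftrightarrow> (\<forall>e\<in>E. dr_aut (\<mu> e)) \<and> (\<forall>s\<in>S - {z}. \<eta> s \<noteq> 0)"

definition cstab :: "('s \<Rightarrow> 's \<Rightarrow> 's) \<Rightarrow> 's \<Rightarrow> 's set \<Rightarrow> 's set \<Rightarrow>
    ('s \<Rightarrow> 'd::division_ring \<Rightarrow> 'd) \<Rightarrow> ('s \<Rightarrow> 's \<Rightarrow> 'd) \<Rightarrow> ('s \<Rightarrow> 's) set" where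
  "cstab m z E S \<alpha> \<xi> = {\<phi>. sg_aut m S \<phi> \<and>
     (\<exists>\<mu> \<eta>. group_elt z E S \<mu> \<eta> \<and>
        act_eq m z E S \<mu> \<eta> \<alpha> \<xi> (\<lambda>s. \<alpha> (\<phi> s)) (\<lambda>s t. \<xi> (\<phi> s) (\<phi> t)))}"

text \<open>Elements of R: coefficient functions S* -> D (zero outside S*); S is finite.\<close>
definition Rcarrier :: "'s \<Rightarrow> 's set \<Rightarrow> ('s \<Rightarrow> 'd::zero) set" where
  "Rcarrier z S = {x. \<forall>u. (u \<notin> S \<or> u = z) \<longrightarrow> x u = 0}"

definition Radd :: "('s \<Rightarrow> 'd::plus) \<Rightarrow> ('s \<Rightarrow> 'd) \<Rightarrow> ('s \<Rightarrow> 'd)" where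
  "Radd x y = (\<lambda>u. x u + y u)"

definition Rmult :: "('s \<Rightarrow> 's \<Rightarrow> 's) \<Rightarrow> 's \<Rightarrow> 's set \<Rightarrow>
    ('s \<Rightarrow> 'd::division_ring \<Rightarrow> 'd) \<Rightarrow> ('s \<Rightarrow> 's \<Rightarrow> 'd) \<Rightarrow>
    ('s \<Rightarrow> 'd) \<Rightarrow> ('s \<Rightarrow> 'd) \<Rightarrow> ('s \<Rightarrow> 'd)" where
  "Rmult m z S \<alpha> \<xi> x y = (\<lambda>u. \<Sum>(s,t)\<in>{(s,t). s \<in> S - {z} \<and> t \<in> S - {z} \<and> m s t = u \<and> u \<noteq> z}.
      x s * \<alpha> s (y t) * \<xi> s t)"

definition Rsingle :: "'s \<Rightarrow> 'd::zero \<Rightarrow> ('s \<Rightarrow> 'd)" where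
  "Rsingle s d = (\<lambda>u. if u = s then d else 0)"

definition R_aut :: "('s \<Rightarrow> 's \<Rightarrow> 's) \<Rightarrow> 's \<Rightarrow> 's set \<Rightarrow>
    ('s \<Rightarrow> 'd::division_ring \<Rightarrow> 'd) \<Rightarrow> ('s \<Rightarrow> 's \<Rightarrow> 'd) \<Rightarrow>
    (('s \<Rightarrow> 'd) \<Rightarrow> ('s \<Rightarrow> 'd)) \<Rightarrow> bool" where
  "R_aut m z S \<alpha> \<xi> \<gamma> \<longleftrightarrow> bij_betw \<gamma> (Rcarrier z S) (Rcarrier z S) \<and>
     (\<forall>x\<in>Rcarrier z S. \<forall>y\<in>Rcarrier z S. \<gamma> (Radd x y) = Radd (\<gamma> x) (\<gamma> y)) \<and>
     (\<forall>x\<in>Rcarrier z S. \<forall>y\<in>Rcarrier z S. \<gamma> (Rmult m z S \<alpha> \<xi> x y) = Rmult m z S \<alpha> \<xi> (\<gamma> x) (\<gamma> y))"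

definition R_aut0 :: "('s \<Rightarrow> 's \<Rightarrow> 's) \<Rightarrow> 's \<Rightarrow> 's set \<Rightarrow> 's set \<Rightarrow>
    ('s \<Rightarrow> 'd::division_ring \<Rightarrow> 'd) \<Rightarrow> ('s \<Rightarrow> 's \<Rightarrow> 'd) \<Rightarrow>
    (('s \<Rightarrow> 'd) \<Rightarrow> ('s \<Rightarrow> 'd)) \<Rightarrow> bool" where
  "R_aut0 m z E S \<alpha> \<xi> \<gamma> \<longleftrightarrow> R_aut m z S \<alpha> \<xi> \<gamma> \<and>
     \<gamma> ` ((\<lambda>e. Rsingle e 1) ` E) = (\<lambda>e. Rsingle e 1) ` E"

text \<open>Im Phi: Phi sends the coset of gamma0 in Aut_0 R, written
gamma0(d s) = mu_e(d) eta(s) phi(s), to phi; every coset of Inn R contains such a gamma0.\<close>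
definition ImPhi :: "('s \<Rightarrow> 's \<Rightarrow> 's) \<Rightarrow> 's \<Rightarrow> 's set \<Rightarrow> 's set \<Rightarrow>
    ('s \<Rightarrow> 'd::division_ring \<Rightarrow> 'd) \<Rightarrow> ('s \<Rightarrow> 's \<Rightarrow> 'd) \<Rightarrow> ('s \<Rightarrow> 's) set" where
  "ImPhi m z E S \<alpha> \<xi> = {\<phi>. sg_aut m S \<phi> \<and>
     (\<exists>\<gamma> \<mu> \<eta>. R_aut0 m z E S \<alpha> \<xi> \<gamma> \<and> group_elt z E S \<mu> \<eta> \<and>
        (\<forall>d. \<forall>s\<in>S - {z}. \<forall>e\<in>E. m e s = s \<longrightarrow>
           \<gamma> (Rsingle s d) = Rsingle (\<phi> s) (\<mu> e d * \<eta> s)))}"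

end

theory Submission
  imports Defs
begin

lemma dr_add: "dr_aut \<sigma> \<Longrightarrow> \<sigma> (x + y) = \<sigma> x + \<sigma> y" by (simp add: dr_aut_def)
lemma dr_mult: "dr_aut \<sigma> \<Longrightarrow> \<sigma> (x * y) = \<sigma> x * \<sigma> y" by (simp add: dr_aut_def)
lemma dr_bij: "dr_aut \<sigma> \<Longrightarrow> bij \<sigma>" by (simp add: dr_aut_def)
lemma dr_zero: "dr_aut \<sigma> \<Longrightarrow> \<sigma> 0 = (0::'d::division_ring)"
proof -
  assume a: "dr_aut \<sigma>"
  have "\<sigma> (0 + 0) = \<sigma> 0 + \<sigma> 0" using dr_add[OF a] .
  thus ?thesis by simp
qed
lemma dr_inj: "dr_aut \<sigma> \<Longrightarrow> \<sigma> x = \<sigma> y \<longleftrightarrow> x = y"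
  using dr_bij bij_is_inj inj_eq by metis
lemma dr_eq0: "dr_aut \<sigma> \<Longrightarrow> \<sigma> x = 0 \<longleftrightarrow> x = (0::'d::division_ring)"
  using dr_inj dr_zero by metis
lemma dr_one: "dr_aut \<sigma> \<Longrightarrow> \<sigma> 1 = (1::'d::division_ring)"
proof -
  assume a: "dr_aut \<sigma>"
  obtain y where y: "\<sigma> y = 1" using dr_bij[OF a] by (metis bij_pointE)
  have "\<sigma> 1 * \<sigma> y = \<sigma> y" using dr_mult[OF a, of 1 y] by simp
  thus ?thesis using y by simp
qed
lemma dr_inverse: "dr_aut \<sigma> \<Longrightarrow> \<sigma> (inverse x) = inverse (\<sigma> (x::'d::division_ring))"
proof (cases "x = 0")
  case True assume a: "dr_aut \<sigma>" thus ?thesis using True dr_zero[OF a] by simp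
next
  case False assume a: "dr_aut \<sigma>"
  have "\<sigma> x * \<sigma> (inverse x) = 1" using dr_mult[OF a, of x "inverse x"] False dr_one[OF a] by simp
  thus ?thesis by (metis inverse_unique)
qed
lemma dr_sum: "dr_aut \<sigma> \<Longrightarrow> \<sigma> (sum f A) = sum (\<lambda>i. \<sigma> (f i)) (A::'i set)"
proof (induction A rule: infinite_finite_induct)
  case (infinite A) thus ?case by (simp add: dr_zero)
next
  case empty thus ?case by (simp add: dr_zero)
next
  case (insert x F) thus ?case by (simp add: dr_add)
qed
lemma dr_inv_l: "dr_aut \<sigma> \<Longrightarrow> inv \<sigma> (\<sigma> x) = x"
  using dr_bij bij_is_inj inv_f_f by metis
lemma dr_inv_r: "dr_aut \<sigma> \<Longrightarrow> \<sigma> (inv \<sigma> x) = x"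
  using dr_bij bij_is_surj surj_f_inv_f by metis
lemma dr_inv: "dr_aut \<sigma> \<Longrightarrow> dr_aut (inv \<sigma>)"
proof -
  assume a: "dr_aut \<sigma>"
  have b: "bij (inv \<sigma>)" using dr_bij[OF a] bij_imp_bij_inv by blast
  have "inv \<sigma> (x + y) = inv \<sigma> x + inv \<sigma> y" for x y
  proof -
    have "\<sigma> (inv \<sigma> x + inv \<sigma> y) = x + y" using dr_add[OF a] dr_inv_r[OF a] by simp
    hence "inv \<sigma> (x + y) = inv \<sigma> (\<sigma> (inv \<sigma> x + inv \<sigma> y))" by simp
    thus ?thesis using dr_inv_l[OF a] by simp
  qed
  moreover have "inv \<sigma> (x * y) = inv \<sigma> x * inv \<sigma> y" for x y
  proof -
    have "\<sigma> (inv \<sigma> x * inv \<sigma> y) = x * y" using dr_mult[OF a] dr_inv_r[OF a] by simp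
    hence "inv \<sigma> (x * y) = inv \<sigma> (\<sigma> (inv \<sigma> x * inv \<sigma> y))" by simp
    thus ?thesis using dr_inv_l[OF a] by simp
  qed
  ultimately show ?thesis using b by (simp add: dr_aut_def)
qed

definition lft :: "('s \<Rightarrow> 's \<Rightarrow> 's) \<Rightarrow> 's set \<Rightarrow> 's \<Rightarrow> 's" where
  "lft m E s = (SOME e. e \<in> E \<and> m e s = s)"
definition rgt :: "('s \<Rightarrow> 's \<Rightarrow> 's) \<Rightarrow> 's set \<Rightarrow> 's \<Rightarrow> 's" where
  "rgt m E s = (SOME f. f \<in> E \<and> m s f = s)"

context
  fixes m z E S
  assumes SF: "sq_free_sg m z E S"
begin

lemma sf_p1: "(\<forall>a\<in>S. \<forall>b\<in>S. m a b \<in> S)"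
  using SF unfolding sq_free_sg_def by (elim conjE) assumption
lemma sf_p2: "z \<in> S"
  using SF unfolding sq_free_sg_def by (elim conjE) assumption
lemma sf_p3: "(\<forall>a\<in>S. m z a = z \<and> m a z = z)"
  using SF unfolding sq_free_sg_def by (elim conjE) assumption
lemma sf_p4: "finite E"
  using SF unfolding sq_free_sg_def by (elim conjE) assumption
lemma sf_p5: "E \<subseteq> S"
  using SF unfolding sq_free_sg_def by (elim conjE) assumption
lemma sf_p6: "(\<forall>e\<in>E. e \<noteq> z \<and> m e e = e)"
  using SF unfolding sq_free_sg_def by (elim conjE) assumption
lemma sf_p7: "(\<forall>e\<in>E. \<forall>f\<in>E. e \<noteq> f \<longrightarrow> m e f = z)"
  using SF unfolding sq_free_sg_def by (elim conjE) assumption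
lemma sf_p8: "S = (\<Union>e\<in>E. \<Union>f\<in>E. eSf m S e f)"
  using SF unfolding sq_free_sg_def by (elim conjE) assumption
lemma sf_closed: "a \<in> S \<Longrightarrow> b \<in> S \<Longrightarrow> m a b \<in> S" using sf_p1 by blast
lemma sf_z: "z \<in> S" using sf_p2 .
lemma sf_zl: "a \<in> S \<Longrightarrow> m z a = z" using sf_p3 by blast
lemma sf_zr: "a \<in> S \<Longrightarrow> m a z = z" using sf_p3 by blast
lemma sf_finE: "finite E" using sf_p4 .
lemma sf_ES: "e \<in> E \<Longrightarrow> e \<in> S" using sf_p5 by blast
lemma sf_Enz: "e \<in> E \<Longrightarrow> e \<noteq> z" using sf_p6 by blast
lemma sf_Eidem: "e \<in> E \<Longrightarrow> m e e = e" using sf_p6 by blast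
lemma sf_orth: "e \<in> E \<Longrightarrow> f \<in> E \<Longrightarrow> e \<noteq> f \<Longrightarrow> m e f = z" using sf_p7 by blast
lemma sf_union: "S = (\<Union>e\<in>E. \<Union>f\<in>E. eSf m S e f)" using sf_p8 .
lemma sf_assoc0: "\<forall>a\<in>S. \<forall>b\<in>S. \<forall>c\<in>S. m (m a b) c = m a (m b c)"
  using SF unfolding sq_free_sg_def by (elim conjE) assumption
lemma sf_assoc: "a \<in> S \<Longrightarrow> b \<in> S \<Longrightarrow> c \<in> S \<Longrightarrow> m (m a b) c = m a (m b c)"
  using sf_assoc0 by simp
lemma sf_uniq: "e \<in> E \<Longrightarrow> f \<in> E \<Longrightarrow> x \<in> eSf m S e f \<Longrightarrow> y \<in> eSf m S e f \<Longrightarrow> x \<noteq> z \<Longrightarrow> y \<noteq> z \<Longrightarrow> x = y"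
proof -
  have "\<forall>e\<in>E. \<forall>f\<in>E. \<forall>x y. x \<in> eSf m S e f - {z} \<longrightarrow> y \<in> eSf m S e f - {z} \<longrightarrow> x = y"
    using SF unfolding sq_free_sg_def by (elim conjE) assumption
  thus "e \<in> E \<Longrightarrow> f \<in> E \<Longrightarrow> x \<in> eSf m S e f \<Longrightarrow> y \<in> eSf m S e f \<Longrightarrow> x \<noteq> z \<Longrightarrow> y \<noteq> z \<Longrightarrow> x = y"
    by blast
qed

lemma sf_decomp:
  assumes "s \<in> S" shows "\<exists>e\<in>E. \<exists>f\<in>E. m (m e s) f = s"
proof -
  have U: "(\<Union>e\<in>E. \<Union>f\<in>E. eSf m S e f) = S" using sf_union[symmetric] .
  have "s \<in> (\<Union>e\<in>E. \<Union>f\<in>E. eSf m S e f)" unfolding U using assms .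
  then obtain e f where "e \<in> E" "f \<in> E" "s \<in> eSf m S e f" by blast
  then obtain e f s0 where ef: "e \<in> E" "f \<in> E" "s0 \<in> S" "s = m (m e s0) f"
    unfolding eSf_def by blast
  have eS: "e \<in> S" and fS: "f \<in> S" using ef sf_ES by auto
  have es0: "m e s0 \<in> S" using sf_closed eS ef(3) by blast
  have "m e s = m e (m (m e s0) f)" using ef(4) by simp
  also have "\<dots> = m (m e (m e s0)) f" using sf_assoc[OF eS es0 fS] by simp
  also have "m e (m e s0) = m e s0" using sf_assoc[OF eS eS ef(3)] sf_Eidem[OF ef(1)] by simp
  finally have 1: "m e s = s" using ef(4) by simp
  have "m s f = m (m (m e s0) f) f" using ef(4) by simp
  also have "\<dots> = m (m e s0) (m f f)" using sf_assoc[OF es0 fS fS] by simp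
  finally have 2: "m s f = s" using ef(4) sf_Eidem[OF ef(2)] by simp
  have "m (m e s) f = s" using 1 2 by simp
  thus ?thesis using ef by blast
qed

lemma sf_lex: "s \<in> S \<Longrightarrow> \<exists>e\<in>E. m e s = s"
proof -
  assume s: "s \<in> S"
  then obtain e f where ef: "e \<in> E" "f \<in> E" "m (m e s) f = s" using sf_decomp by blast
  have eS: "e \<in> S" "f \<in> S" using sf_ES ef by auto
  have es: "m e s \<in> S" using sf_closed eS s by blast
  have "m e s = m e (m (m e s) f)" using ef by simp
  also have "\<dots> = m (m e (m e s)) f" using sf_assoc[OF eS(1) es eS(2)] by simp
  also have "m e (m e s) = m e s" using sf_assoc[OF eS(1) eS(1) s] sf_Eidem[OF ef(1)] by simp
  finally show ?thesis using ef by auto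
qed
lemma sf_rex: "s \<in> S \<Longrightarrow> \<exists>f\<in>E. m s f = s"
proof -
  assume s: "s \<in> S"
  then obtain e f where ef: "e \<in> E" "f \<in> E" "m (m e s) f = s" using sf_decomp by blast
  have es: "m e s \<in> S" using sf_closed sf_ES ef s by blast
  have "m s f = m (m (m e s) f) f" using ef by simp
  also have "\<dots> = m (m e s) (m f f)" using sf_assoc[OF es] sf_ES ef by blast
  finally show ?thesis using ef sf_Eidem by auto
qed

lemma lft: "s \<in> S \<Longrightarrow> lft m E s \<in> E \<and> m (lft m E s) s = s"
  unfolding lft_def by (rule someI_ex) (use sf_lex in blast)
lemma rgt: "s \<in> S \<Longrightarrow> rgt m E s \<in> E \<and> m s (rgt m E s) = s"
  unfolding rgt_def by (rule someI_ex) (use sf_rex in blast)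

lemma lft_uniq:
  assumes "s \<in> S" "s \<noteq> z" "e \<in> E" "m e s = s" shows "e = lft m E s"
proof (rule ccontr)
  assume ne: "e \<noteq> lft m E s"
  have l: "lft m E s \<in> E" "m (lft m E s) s = s" using lft assms(1) by auto
  have "s = m e (m (lft m E s) s)" using assms l by simp
  also have "\<dots> = m (m e (lft m E s)) s" using sf_assoc sf_ES assms l by metis
  also have "\<dots> = z" using sf_orth[OF assms(3) l(1) ne] sf_zl assms by simp
  finally show False using assms by simp
qed

lemma rgt_uniq:
  assumes "s \<in> S" "s \<noteq> z" "f \<in> E" "m s f = s" shows "f = rgt m E s"
proof (rule ccontr)
  assume ne: "f \<noteq> rgt m E s"
  have l: "rgt m E s \<in> E" "m s (rgt m E s) = s" using rgt assms(1) by auto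
  have "s = m (m s (rgt m E s)) f" using assms l by simp
  also have "\<dots> = m s (m (rgt m E s) f)" using sf_assoc sf_ES assms l by metis
  also have "\<dots> = z" using sf_orth[OF l(1) assms(3)] ne sf_zr assms by simp
  finally show False using assms by simp
qed

lemma lft_E: "e \<in> E \<Longrightarrow> lft m E e = e"
  using lft_uniq sf_ES sf_Enz sf_Eidem by metis
lemma rgt_E: "e \<in> E \<Longrightarrow> rgt m E e = e"
  using rgt_uniq sf_ES sf_Enz sf_Eidem by metis

lemma prod_mid:
  assumes "s \<in> S" "t \<in> S" "m s t \<noteq> z" shows "rgt m E s = lft m E t"
proof (rule ccontr)
  assume ne: "rgt m E s \<noteq> lft m E t"
  have r: "rgt m E s \<in> E" "m s (rgt m E s) = s" using rgt assms(1) by auto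
  have l: "lft m E t \<in> E" "m (lft m E t) t = t" using lft assms(2) by auto
  have rS: "rgt m E s \<in> S" and lS: "lft m E t \<in> S" using r l sf_ES by auto
  have "m s t = m (m s (rgt m E s)) (m (lft m E t) t)" using r l by simp
  also have "\<dots> = m s (m (m (rgt m E s) (lft m E t)) t)"
    using sf_assoc sf_closed assms rS lS by metis
  also have "\<dots> = z" using sf_orth[OF r(1) l(1) ne] sf_zl sf_zr assms by simp
  finally show False using assms by simp
qed

lemma lft_prod:
  assumes "s \<in> S" "t \<in> S" "m s t \<noteq> z" shows "lft m E (m s t) = lft m E s"
proof -
  have l: "lft m E s \<in> E" "m (lft m E s) s = s" using lft assms(1) by auto
  have "m (lft m E s) (m s t) = m s t" using sf_assoc sf_ES assms l by metis
  thus ?thesis using lft_uniq[of "m s t" "lft m E s"] sf_closed assms l by metis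
qed

lemma rgt_prod:
  assumes "s \<in> S" "t \<in> S" "m s t \<noteq> z" shows "rgt m E (m s t) = rgt m E t"
proof -
  have l: "rgt m E t \<in> E" "m t (rgt m E t) = t" using rgt assms(2) by auto
  have "m (m s t) (rgt m E t) = m s t" using sf_assoc sf_ES assms l by metis
  thus ?thesis using rgt_uniq[of "m s t" "rgt m E t"] sf_closed assms l by metis
qed

lemma sf_idem:
  assumes "s \<in> S" "s \<noteq> z" "m s s = s" shows "s \<in> E"
proof -
  let ?e = "lft m E s"
  have l: "?e \<in> E" "m ?e s = s" using lft assms(1) by auto
  have r: "rgt m E s = ?e" using prod_mid assms by metis
  have r2: "m s ?e = s" using rgt[OF assms(1)] r by simp
  have "s = m (m ?e s) ?e" using l r2 by simp
  hence "s \<in> eSf m S ?e ?e" unfolding eSf_def using assms(1) by blast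
  moreover have "?e = m (m ?e ?e) ?e" using l sf_Eidem by simp
  hence "?e \<in> eSf m S ?e ?e" unfolding eSf_def using l sf_ES by blast
  ultimately have "s = ?e" using sf_uniq l assms sf_Enz by metis
  thus ?thesis using l by simp
qed

lemma sf_finite: "finite S"
proof -
  have sub: "S \<subseteq> insert z (\<Union>e\<in>E. \<Union>f\<in>E. eSf m S e f - {z})"
  proof
    fix s assume "s \<in> S"
    have U: "(\<Union>e\<in>E. \<Union>f\<in>E. eSf m S e f) = S" using sf_union[symmetric] .
    have "s \<in> (\<Union>e\<in>E. \<Union>f\<in>E. eSf m S e f)" unfolding U by fact
    thus "s \<in> insert z (\<Union>e\<in>E. \<Union>f\<in>E. eSf m S e f - {z})" by blast
  qed
  have "finite (eSf m S e f - {z})" if "e \<in> E" "f \<in> E" for e f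
  proof (cases "eSf m S e f - {z} = {}")
    case True thus ?thesis by (metis finite.emptyI)
  next
    case False
    then obtain a where a: "a \<in> eSf m S e f - {z}" by blast
    have "eSf m S e f - {z} \<subseteq> {a}" using sf_uniq[OF that] a by blast
    thus ?thesis using finite_subset by blast
  qed
  hence "finite (\<Union>e\<in>E. \<Union>f\<in>E. eSf m S e f - {z})" using sf_finE by blast
  thus ?thesis using sub finite_subset by blast
qed

lemma sf_nz_prod_ok:
  assumes "s \<in> S" "t \<in> S" "m s t \<noteq> z" shows "s \<noteq> z" "t \<noteq> z"
  using assms sf_zl sf_zr by auto

end

context
  fixes m z E S
  assumes SF: "sq_free_sg m z E S"
begin

lemma lr_of:
  assumes "s \<in> S" "s \<noteq> z" "e \<in> E" "f \<in> E" "m (m e s) f = s"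
  shows "e = lft m E s" "f = rgt m E s"
proof -
  have eS: "e \<in> S" "f \<in> S" using assms sf_ES[OF SF] by auto
  have es: "m e s \<in> S" using sf_closed[OF SF] eS assms by blast
  have "m e s = m e (m (m e s) f)" using assms by simp
  also have "\<dots> = m (m e (m e s)) f" using sf_assoc[OF SF eS(1) es eS(2)] by simp
  also have "m e (m e s) = m e s" using sf_assoc[OF SF eS(1) eS(1) assms(1)] sf_Eidem[OF SF assms(3)] by simp
  finally have 1: "m e s = s" using assms by simp
  have "m s f = s" using assms 1 by simp
  show "e = lft m E s" using lft_uniq[OF SF assms(1,2,3) 1] .
  show "f = rgt m E s" using rgt_uniq[OF SF assms(1,2,4) \<open>m s f = s\<close>] .
qed

context
  fixes \<phi>
  assumes PA: "sg_aut m S \<phi>"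
begin

lemma phi_bij: "bij_betw \<phi> S S" using PA by (simp add: sg_aut_def)
lemma phi_S: "s \<in> S \<Longrightarrow> \<phi> s \<in> S" using bij_betw_apply[OF phi_bij] .
lemma phi_inj: "s \<in> S \<Longrightarrow> t \<in> S \<Longrightarrow> \<phi> s = \<phi> t \<Longrightarrow> s = t"
  using inj_onD[OF bij_betw_imp_inj_on[OF phi_bij]] by blast
lemma phi_m: "s \<in> S \<Longrightarrow> t \<in> S \<Longrightarrow> \<phi> (m s t) = m (\<phi> s) (\<phi> t)" using PA by (simp add: sg_aut_def)
lemma psi_S: "u \<in> S \<Longrightarrow> inv_into S \<phi> u \<in> S"
  using bij_betw_apply[OF bij_betw_inv_into[OF phi_bij]] .
lemma phi_psi: "u \<in> S \<Longrightarrow> \<phi> (inv_into S \<phi> u) = u"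
  using bij_betw_inv_into_right[OF phi_bij] .
lemma psi_phi: "s \<in> S \<Longrightarrow> inv_into S \<phi> (\<phi> s) = s"
  using bij_betw_inv_into_left[OF phi_bij] .

lemma phi_z: "\<phi> z = z"
proof -
  have zS: "z \<in> S" using sf_z[OF SF] .
  have "\<phi> z = \<phi> (m z (inv_into S \<phi> z))" using sf_zl[OF SF psi_S[OF zS]] by simp
  also have "\<dots> = m (\<phi> z) z" using phi_m[OF zS psi_S[OF zS]] phi_psi[OF zS] by simp
  also have "\<dots> = z" using sf_zr[OF SF phi_S[OF zS]] .
  finally show ?thesis .
qed

lemma phi_nz: "s \<in> S \<Longrightarrow> s \<noteq> z \<Longrightarrow> \<phi> s \<noteq> z"
proof
  assume "s \<in> S" "s \<noteq> z" "\<phi> s = z"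
  hence "\<phi> s = \<phi> z" using phi_z by simp
  thus False using phi_inj[OF \<open>s \<in> S\<close> sf_z[OF SF]] \<open>s \<noteq> z\<close> by blast
qed

lemma psi_nz: "u \<in> S \<Longrightarrow> u \<noteq> z \<Longrightarrow> inv_into S \<phi> u \<noteq> z"
proof
  assume "u \<in> S" "u \<noteq> z" "inv_into S \<phi> u = z"
  hence "u = \<phi> z" using phi_psi[of u] by simp
  thus False using phi_z \<open>u \<noteq> z\<close> by simp
qed

lemma phi_E: "e \<in> E \<Longrightarrow> \<phi> e \<in> E"
proof -
  assume e: "e \<in> E"
  have eS: "e \<in> S" using sf_ES[OF SF e] .
  have "m (\<phi> e) (\<phi> e) = \<phi> e" using phi_m[OF eS eS] sf_Eidem[OF SF e] by simp
  thus ?thesis using sf_idem[OF SF] phi_S[OF eS] phi_nz[OF eS sf_Enz[OF SF e]] by blast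
qed

lemma phi_EE: "\<phi> ` E = E"
proof
  show "\<phi> ` E \<subseteq> E" using phi_E by blast
  show "E \<subseteq> \<phi> ` E"
  proof
    fix e assume e: "e \<in> E"
    have eS: "e \<in> S" using sf_ES[OF SF e] .
    let ?s = "inv_into S \<phi> e"
    have sS: "?s \<in> S" using psi_S[OF eS] .
    have snz: "?s \<noteq> z" using psi_nz[OF eS sf_Enz[OF SF e]] .
    have "\<phi> (m ?s ?s) = \<phi> ?s" using phi_m[OF sS sS] phi_psi[OF eS] sf_Eidem[OF SF e] by simp
    hence "m ?s ?s = ?s" using phi_inj[OF sf_closed[OF SF sS sS] sS] by blast
    hence "?s \<in> E" using sf_idem[OF SF sS snz] by blast
    thus "e \<in> \<phi> ` E" using image_eqI[of e \<phi> ?s E] phi_psi[OF eS] by simp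
  qed
qed

lemma phi_lft: "s \<in> S \<Longrightarrow> s \<noteq> z \<Longrightarrow> lft m E (\<phi> s) = \<phi> (lft m E s)"
proof -
  assume s: "s \<in> S" "s \<noteq> z"
  have l: "lft m E s \<in> E" "m (lft m E s) s = s" using lft[OF SF s(1)] by auto
  have "m (\<phi> (lft m E s)) (\<phi> s) = \<phi> s" using phi_m[OF sf_ES[OF SF l(1)] s(1)] l by simp
  thus ?thesis using lft_uniq[OF SF phi_S[OF s(1)] phi_nz[OF s] phi_E[OF l(1)]] by simp
qed

end
end

lemma Rsingle_car: "s \<in> S \<Longrightarrow> s \<noteq> z \<Longrightarrow> Rsingle s d \<in> Rcarrier z S"
  unfolding Rcarrier_def Rsingle_def by auto

lemma Rmult_single:
  assumes SF: "sq_free_sg m z E S" and C: "cocycle m z S \<alpha> \<xi>"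
    and s: "s \<in> S" "s \<noteq> z" and t: "t \<in> S" "t \<noteq> z" and st: "m s t \<noteq> z"
  shows "Rmult m z S \<alpha> \<xi> (Rsingle s a) (Rsingle t b) = Rsingle (m s t) (a * \<alpha> s b * \<xi> s t)"
proof
  fix u
  let ?P = "{(s', t'). s' \<in> S - {z} \<and> t' \<in> S - {z} \<and> m s' t' = u \<and> u \<noteq> z}"
  have fin: "finite ?P"
  proof (rule finite_subset)
    show "?P \<subseteq> S \<times> S" by blast
    show "finite (S \<times> S)" using sf_finite[OF SF] by blast
  qed
  have au: "\<And>s'. s' \<in> S - {z} \<Longrightarrow> dr_aut (\<alpha> s')" using C by (simp add: cocycle_def)
  have "Rmult m z S \<alpha> \<xi> (Rsingle s a) (Rsingle t b) u =
      (\<Sum>p\<in>?P. if p = (s, t) then a * \<alpha> s b * \<xi> s t else 0)"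
    unfolding Rmult_def
  proof (rule sum.cong[OF refl])
    fix p assume p: "p \<in> ?P"
    obtain s' t' where pp: "p = (s', t')" by (cases p)
    have "s' \<in> S - {z}" using p pp by auto
    hence "\<alpha> s' 0 = 0" using dr_zero au by blast
    thus "(case p of (s1, t1) \<Rightarrow> Rsingle s a s1 * \<alpha> s1 (Rsingle t b t1) * \<xi> s1 t1) =
          (if p = (s, t) then a * \<alpha> s b * \<xi> s t else 0)"
      unfolding pp Rsingle_def by auto
  qed
  also have "\<dots> = (if (s, t) \<in> ?P then a * \<alpha> s b * \<xi> s t else 0)"
    by (rule sum.delta[OF fin])
  also have "\<dots> = Rsingle (m s t) (a * \<alpha> s b * \<xi> s t) u"
  proof -
    have "(s, t) \<in> ?P \<longleftrightarrow> u = m s t" using s t st by blast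
    thus ?thesis unfolding Rsingle_def by simp
  qed
  finally show "Rmult m z S \<alpha> \<xi> (Rsingle s a) (Rsingle t b) u = Rsingle (m s t) (a * \<alpha> s b * \<xi> s t) u" .
qed

lemma algA:
  fixes \<mu>e \<mu>f \<alpha>1 \<alpha>2 :: "'d::division_ring \<Rightarrow> 'd" and a b c x y :: 'd
  assumes me: "dr_aut \<mu>e" and mf: "dr_aut \<mu>f" and a1: "dr_aut \<alpha>1" and a2: "dr_aut \<alpha>2"
    and a0: "a \<noteq> 0" and b0: "b \<noteq> 0" and c0: "c \<noteq> 0" and x0: "x \<noteq> 0"
    and H: "\<And>d1 d2. \<mu>e (d1 * \<alpha>1 d2 * x) * c = \<mu>e d1 * a * \<alpha>2 (\<mu>f d2 * b) * y"
  shows "\<And>d. inv \<mu>e (\<alpha>2 d) = rho (inverse (inv \<mu>e a)) (\<alpha>1 (inv \<mu>f d))"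
    and "inv \<mu>e y = inverse (inv \<mu>e a) * \<alpha>1 (inverse (inv \<mu>f b)) * x * inverse (inverse (inv \<mu>e c))"
proof -
  have X: "\<mu>e x * c = a * \<alpha>2 b * y"
    using H[of 1 1] by (simp add: dr_one[OF me] dr_one[OF mf] dr_one[OF a1])
  have y0: "y \<noteq> 0"
  proof
    assume "y = 0" hence "\<mu>e x * c = 0" using X by simp
    thus False using dr_eq0[OF me] x0 c0 by simp
  qed
  have b2: "\<alpha>2 b \<noteq> 0" using dr_eq0[OF a2] b0 by simp
  have K: "\<mu>e (\<alpha>1 d) * a = a * \<alpha>2 (\<mu>f d)" for d
  proof -
    have "\<mu>e (\<alpha>1 d) * \<mu>e x * c = a * \<alpha>2 (\<mu>f d) * \<alpha>2 b * y"
      using H[of 1 d] by (simp add: dr_one[OF me] dr_mult[OF me] dr_mult[OF a2] mult.assoc)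
    hence "\<mu>e (\<alpha>1 d) * (\<mu>e x * c) = a * \<alpha>2 (\<mu>f d) * (\<alpha>2 b * y)" by (simp add: mult.assoc)
    hence "(\<mu>e (\<alpha>1 d) * a) * (\<alpha>2 b * y) = (a * \<alpha>2 (\<mu>f d)) * (\<alpha>2 b * y)"
      unfolding X by (simp add: mult.assoc)
    thus ?thesis using y0 b2 by simp
  qed
  let ?A = "inv \<mu>e a"
  have A0: "?A \<noteq> 0" using dr_eq0[OF dr_inv[OF me]] a0 by simp
  have I: "inv \<mu>e (\<alpha>2 d) = inverse ?A * \<alpha>1 (inv \<mu>f d) * ?A" for d
  proof -
    have "a * \<alpha>2 d = \<mu>e (\<alpha>1 (inv \<mu>f d)) * a" using K[of "inv \<mu>f d"] dr_inv_r[OF mf] by simp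
    hence "inverse a * (a * \<alpha>2 d) = inverse a * (\<mu>e (\<alpha>1 (inv \<mu>f d)) * a)" by simp
    hence "\<alpha>2 d = inverse a * \<mu>e (\<alpha>1 (inv \<mu>f d)) * a"
      using a0 by (simp add: mult.assoc[symmetric])
    hence "inv \<mu>e (\<alpha>2 d) = inv \<mu>e (inverse a * \<mu>e (\<alpha>1 (inv \<mu>f d)) * a)" by simp
    thus ?thesis
      by (simp add: dr_mult[OF dr_inv[OF me]] dr_inverse[OF dr_inv[OF me]] dr_inv_l[OF me])
  qed
  show "inv \<mu>e (\<alpha>2 d) = rho (inverse (inv \<mu>e a)) (\<alpha>1 (inv \<mu>f d))" for d
    unfolding I rho_def by simp
  have Y: "y = inverse (\<alpha>2 b) * inverse a * \<mu>e x * c"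
  proof -
    have "inverse (\<alpha>2 b) * inverse a * (\<mu>e x * c) = inverse (\<alpha>2 b) * inverse a * (a * \<alpha>2 b * y)"
      unfolding X ..
    also have "\<dots> = inverse (\<alpha>2 b) * (inverse a * a) * \<alpha>2 b * y" by (simp add: mult.assoc)
    also have "\<dots> = y" using a0 b2 by simp
    finally show ?thesis by (simp add: mult.assoc)
  qed
  let ?B = "inv \<mu>f b"
  have B0: "?B \<noteq> 0" using dr_eq0[OF dr_inv[OF mf]] b0 by simp
  have "inv \<mu>e y = inverse (inv \<mu>e (\<alpha>2 b)) * inverse ?A * x * inv \<mu>e c"
    unfolding Y by (simp add: dr_mult[OF dr_inv[OF me]] dr_inverse[OF dr_inv[OF me]] dr_inv_l[OF me])
  also have "inv \<mu>e (\<alpha>2 b) = inverse ?A * \<alpha>1 ?B * ?A" by (rule I)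
  also have "inverse (inverse ?A * \<alpha>1 ?B * ?A) = inverse ?A * inverse (\<alpha>1 ?B) * ?A"
  proof -
    have "\<alpha>1 ?B \<noteq> 0" using dr_eq0[OF a1] B0 by simp
    thus ?thesis using A0 by (simp add: nonzero_inverse_mult_distrib mult.assoc)
  qed
  finally have "inv \<mu>e y = inverse ?A * inverse (\<alpha>1 ?B) * (?A * inverse ?A) * x * inv \<mu>e c"
    by (simp add: mult.assoc)
  thus "inv \<mu>e y = inverse (inv \<mu>e a) * \<alpha>1 (inverse (inv \<mu>f b)) * x * inverse (inverse (inv \<mu>e c))"
    using A0 by (simp add: dr_inverse[OF a1])
qed

lemma algB:
  fixes \<mu>e \<mu>f \<alpha>1 \<alpha>2 :: "'d::division_ring \<Rightarrow> 'd" and a b c x y :: 'd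
  assumes me: "dr_aut \<mu>e" and mf: "dr_aut \<mu>f" and a1: "dr_aut \<alpha>1" and a2: "dr_aut \<alpha>2"
    and a0: "a \<noteq> 0" and b0: "b \<noteq> 0" and c0: "c \<noteq> 0"
    and H1: "\<And>d. \<mu>e (\<alpha>2 d) = rho a (\<alpha>1 (\<mu>f d))"
    and H2: "\<mu>e y = a * \<alpha>1 b * x * inverse c"
  shows "inv \<mu>e (d1 * \<alpha>1 d2 * x) * inverse (inv \<mu>e c)
     = inv \<mu>e d1 * inverse (inv \<mu>e a) * \<alpha>2 (inv \<mu>f d2 * inverse (inv \<mu>f b)) * y"
proof -
  have ie: "dr_aut (inv \<mu>e)" using dr_inv[OF me] .
  have "\<mu>e (inv \<mu>e d1 * inverse (inv \<mu>e a) * \<alpha>2 (inv \<mu>f d2 * inverse (inv \<mu>f b)) * y)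
      = d1 * inverse a * (a * \<alpha>1 (d2 * inverse b) * inverse a) * (a * \<alpha>1 b * x * inverse c)"
    by (simp add: dr_mult[OF me] dr_inverse[OF me] dr_inv_r[OF me] H1 H2 rho_def
        dr_mult[OF mf] dr_inverse[OF mf] dr_inv_r[OF mf])
  also have "\<dots> = d1 * (inverse a * a) * \<alpha>1 (d2 * inverse b) * (inverse a * a) * \<alpha>1 b * x * inverse c"
    by (simp add: mult.assoc)
  also have "\<dots> = d1 * \<alpha>1 d2 * (\<alpha>1 (inverse b) * \<alpha>1 b) * x * inverse c"
    using a0 by (simp add: dr_mult[OF a1] mult.assoc)
  also have "\<alpha>1 (inverse b) * \<alpha>1 b = 1"
    using b0 by (simp add: dr_mult[OF a1, symmetric] dr_one[OF a1])
  also have "\<mu>e (inv \<mu>e (d1 * \<alpha>1 d2 * x) * inverse (inv \<mu>e c)) = d1 * \<alpha>1 d2 * x * inverse c"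
    by (simp add: dr_mult[OF me] dr_inverse[OF me] dr_inv_r[OF me])
  ultimately have "\<mu>e (inv \<mu>e (d1 * \<alpha>1 d2 * x) * inverse (inv \<mu>e c)) =
    \<mu>e (inv \<mu>e d1 * inverse (inv \<mu>e a) * \<alpha>2 (inv \<mu>f d2 * inverse (inv \<mu>f b)) * y)" by simp
  thus ?thesis using dr_inj[OF me] by blast
qed

lemma coc_aut: "cocycle m z S \<alpha> \<xi> \<Longrightarrow> s \<in> S \<Longrightarrow> s \<noteq> z \<Longrightarrow> dr_aut (\<alpha> s)"
  unfolding cocycle_def by blast
lemma coc_xi: "cocycle m z S \<alpha> \<xi> \<Longrightarrow> s \<in> S \<Longrightarrow> t \<in> S \<Longrightarrow> m s t \<noteq> z \<Longrightarrow> \<xi> s t \<noteq> 0"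
  unfolding cocycle_def by blast
lemma ge_mu: "group_elt z E S \<mu> \<eta> \<Longrightarrow> e \<in> E \<Longrightarrow> dr_aut (\<mu> e)"
  unfolding group_elt_def by blast
lemma ge_eta: "group_elt z E S \<mu> \<eta> \<Longrightarrow> s \<in> S \<Longrightarrow> s \<noteq> z \<Longrightarrow> \<eta> s \<noteq> 0"
  unfolding group_elt_def by blast

lemma dirA:
  assumes SF: "sq_free_sg m z E S" and C: "cocycle m z S \<alpha> \<xi>"
    and phi: "\<phi> \<in> ImPhi m z E S \<alpha> \<xi>"
  shows "\<phi> \<in> cstab m z E S \<alpha> \<xi>"
proof -
  obtain \<gamma> \<mu> \<eta> where PA: "sg_aut m S \<phi>" and G: "R_aut0 m z E S \<alpha> \<xi> \<gamma>"
    and GE: "group_elt z E S \<mu> \<eta>"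
    and H: "\<And>d s e. s \<in> S - {z} \<Longrightarrow> e \<in> E \<Longrightarrow> m e s = s \<Longrightarrow>
           \<gamma> (Rsingle s d) = Rsingle (\<phi> s) (\<mu> e d * \<eta> s)"
    using phi unfolding ImPhi_def by blast
  let ?L = "lft m E"
  have HL: "\<gamma> (Rsingle s d) = Rsingle (\<phi> s) (\<mu> (?L s) d * \<eta> s)" if "s \<in> S" "s \<noteq> z" for s d
    using H[of s "?L s" d] lft[OF SF that(1)] that by blast
  have mult: "\<gamma> (Rmult m z S \<alpha> \<xi> x y) = Rmult m z S \<alpha> \<xi> (\<gamma> x) (\<gamma> y)"
    if "x \<in> Rcarrier z S" "y \<in> Rcarrier z S" for x y
    using G that unfolding R_aut0_def R_aut_def by blast
  have Gen: "\<mu> (?L s) (d1 * \<alpha> s d2 * \<xi> s t) * \<eta> (m s t)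
      = \<mu> (?L s) d1 * \<eta> s * \<alpha> (\<phi> s) (\<mu> (?L t) d2 * \<eta> t) * \<xi> (\<phi> s) (\<phi> t)"
    if s: "s \<in> S" "s \<noteq> z" and t: "t \<in> S" "t \<noteq> z" and st: "m s t \<noteq> z" for s t d1 d2
  proof -
    have stS: "m s t \<in> S" using sf_closed[OF SF s(1) t(1)] .
    have ps: "\<phi> s \<in> S" "\<phi> s \<noteq> z" using phi_S[OF SF PA s(1)] phi_nz[OF SF PA s] by auto
    have pt: "\<phi> t \<in> S" "\<phi> t \<noteq> z" using phi_S[OF SF PA t(1)] phi_nz[OF SF PA t] by auto
    have pst: "m (\<phi> s) (\<phi> t) = \<phi> (m s t)" using phi_m[OF SF PA s(1) t(1)] by simp
    have pst0: "m (\<phi> s) (\<phi> t) \<noteq> z" using pst phi_nz[OF SF PA stS st] by simp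
    have "\<gamma> (Rmult m z S \<alpha> \<xi> (Rsingle s d1) (Rsingle t d2))
        = Rsingle (\<phi> (m s t)) (\<mu> (?L s) (d1 * \<alpha> s d2 * \<xi> s t) * \<eta> (m s t))"
      using Rmult_single[OF SF C s t st] HL[OF stS st] lft_prod[OF SF s(1) t(1) st] by simp
    moreover have "\<gamma> (Rmult m z S \<alpha> \<xi> (Rsingle s d1) (Rsingle t d2))
        = Rsingle (\<phi> (m s t)) (\<mu> (?L s) d1 * \<eta> s * \<alpha> (\<phi> s) (\<mu> (?L t) d2 * \<eta> t) * \<xi> (\<phi> s) (\<phi> t))"
      using mult[OF Rsingle_car[OF s] Rsingle_car[OF t]] HL[OF s] HL[OF t]
        Rmult_single[OF SF C ps pt pst0] pst by simp
    ultimately have "Rsingle (\<phi> (m s t)) (\<mu> (?L s) (d1 * \<alpha> s d2 * \<xi> s t) * \<eta> (m s t))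
       = Rsingle (\<phi> (m s t)) (\<mu> (?L s) d1 * \<eta> s * \<alpha> (\<phi> s) (\<mu> (?L t) d2 * \<eta> t) * \<xi> (\<phi> s) (\<phi> t))"
      by simp
    from fun_cong[OF this, of "\<phi> (m s t)"] show ?thesis unfolding Rsingle_def by simp
  qed
  have A: "(\<forall>d. inv (\<mu> (?L s)) (\<alpha> (\<phi> s) d) = rho (inverse (inv (\<mu> (?L s)) (\<eta> s))) (\<alpha> s (inv (\<mu> (?L t)) d)))
     \<and> inv (\<mu> (?L s)) (\<xi> (\<phi> s) (\<phi> t)) = inverse (inv (\<mu> (?L s)) (\<eta> s)) * \<alpha> s (inverse (inv (\<mu> (?L t)) (\<eta> t)))
          * \<xi> s t * inverse (inverse (inv (\<mu> (?L s)) (\<eta> (m s t))))"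
    if s: "s \<in> S" "s \<noteq> z" and t: "t \<in> S" "t \<noteq> z" and st: "m s t \<noteq> z" for s t
  proof -
    have stS: "m s t \<in> S" using sf_closed[OF SF s(1) t(1)] .
    have ps: "\<phi> s \<in> S" "\<phi> s \<noteq> z" using phi_S[OF SF PA s(1)] phi_nz[OF SF PA s] by auto
    note aa = algA[OF ge_mu[OF GE conjunct1[OF lft[OF SF s(1)]]] ge_mu[OF GE conjunct1[OF lft[OF SF t(1)]]]
        coc_aut[OF C s] coc_aut[OF C ps] ge_eta[OF GE s] ge_eta[OF GE t] ge_eta[OF GE stS st]
        coc_xi[OF C s(1) t(1) st] Gen[OF s t st]]
    show ?thesis using aa by blast
  qed
  let ?\<mu>' = "\<lambda>e. inv (\<mu> e)"
  let ?\<eta>' = "\<lambda>s. inverse (inv (\<mu> (?L s)) (\<eta> s))"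
  have ge': "group_elt z E S ?\<mu>' ?\<eta>'"
    unfolding group_elt_def
  proof (intro conjI ballI)
    fix e assume "e \<in> E" thus "dr_aut (inv (\<mu> e))" using dr_inv ge_mu[OF GE] by blast
  next
    fix s assume s: "s \<in> S - {z}"
    have da: "dr_aut (inv (\<mu> (?L s)))" using dr_inv ge_mu[OF GE] lft[OF SF] s by blast
    have "\<eta> s \<noteq> 0" using ge_eta[OF GE] s by blast
    thus "inverse (inv (\<mu> (?L s)) (\<eta> s)) \<noteq> 0" using dr_eq0[OF da] by simp
  qed
  have ae: "act_eq m z E S ?\<mu>' ?\<eta>' \<alpha> \<xi> (\<lambda>s. \<alpha> (\<phi> s)) (\<lambda>s t. \<xi> (\<phi> s) (\<phi> t))"
    unfolding act_eq_def
  proof (intro conjI ballI allI impI)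
    fix s e f assume s: "s \<in> S - {z}" and e: "e \<in> E" and f: "f \<in> E" and sef: "m (m e s) f = s"
    have eL: "e = ?L s" and fR: "f = rgt m E s" using lr_of[OF SF _ _ e f sef] s by auto
    have fS: "f \<in> S" "f \<noteq> z" using sf_ES[OF SF f] sf_Enz[OF SF f] by auto
    have sf: "m s f = s" using rgt[OF SF] s fR by auto
    have Lf: "?L f = f" using lft_E[OF SF f] .
    show "inv (\<mu> e) \<circ> \<alpha> (\<phi> s) = rho (inverse (inv (\<mu> (?L s)) (\<eta> s))) \<circ> \<alpha> s \<circ> inv (\<mu> f)"
    proof
      fix d
      have "m s f \<noteq> z" using sf s by simp
      from spec[OF conjunct1[OF A[OF _ _ fS this]], of d] s Lf eL
      show "(inv (\<mu> e) \<circ> \<alpha> (\<phi> s)) d = (rho (inverse (inv (\<mu> (?L s)) (\<eta> s))) \<circ> \<alpha> s \<circ> inv (\<mu> f)) d"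
        by simp
    qed
  next
    fix s t e assume s: "s \<in> S - {z}" and t: "t \<in> S - {z}" and e: "e \<in> E" and es: "m e s = s"
      and st: "m s t \<noteq> z"
    have eL: "e = ?L s" using lft_uniq[OF SF _ _ e es] s by auto
    have Lst: "?L (m s t) = ?L s" using lft_prod[OF SF _ _ st] s t by auto
    from conjunct2[OF A[OF _ _ _ _ st]] s t eL Lst
    show "inv (\<mu> e) (\<xi> (\<phi> s) (\<phi> t)) = inverse (inv (\<mu> (?L s)) (\<eta> s)) * \<alpha> s (inverse (inv (\<mu> (?L t)) (\<eta> t)))
       * \<xi> s t * inverse (inverse (inv (\<mu> (?L (m s t))) (\<eta> (m s t))))"
      by simp
  qed
  show ?thesis unfolding cstab_def using PA ge' ae by blast
qed

lemma dirB:
  fixes m :: "'s \<Rightarrow> 's \<Rightarrow> 's" and \<alpha> :: "'s \<Rightarrow> 'd::division_ring \<Rightarrow> 'd" and \<xi> :: "'s \<Rightarrow> 's \<Rightarrow> 'd"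
  assumes SF: "sq_free_sg m z E S" and C: "cocycle m z S \<alpha> \<xi>" and N: "normal_cocycle E \<alpha> \<xi>"
    and phi: "\<phi> \<in> cstab m z E S \<alpha> \<xi>"
  shows "\<phi> \<in> ImPhi m z E S \<alpha> \<xi>"
proof -
  obtain \<mu> \<eta> where PA: "sg_aut m S \<phi>" and GE: "group_elt z E S \<mu> \<eta>"
    and AE: "act_eq m z E S \<mu> \<eta> \<alpha> \<xi> (\<lambda>s. \<alpha> (\<phi> s)) (\<lambda>s t. \<xi> (\<phi> s) (\<phi> t))"
    using phi unfolding cstab_def by blast
  have AE1: "\<mu> e \<circ> \<alpha> (\<phi> s) = rho (\<eta> s) \<circ> \<alpha> s \<circ> \<mu> f"
    if "s \<in> S - {z}" "e \<in> E" "f \<in> E" "m (m e s) f = s" for s e f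
    using AE that unfolding act_eq_def by blast
  have AE2: "\<mu> e (\<xi> (\<phi> s) (\<phi> t)) = \<eta> s * \<alpha> s (\<eta> t) * \<xi> s t * inverse (\<eta> (m s t))"
    if "s \<in> S - {z}" "t \<in> S - {z}" "e \<in> E" "m e s = s" "m s t \<noteq> z" for s t e
    using AE that unfolding act_eq_def by blast
  let ?L = "lft m E"
  let ?\<psi> = "inv_into S \<phi>"
  define \<mu>' where "\<mu>' = (\<lambda>e. inv (\<mu> e))"
  define \<eta>' where "\<eta>' = (\<lambda>s. inverse (inv (\<mu> (?L s)) (\<eta> s)))"
  define \<gamma> where "\<gamma> = (\<lambda>x::'s \<Rightarrow> 'd. (\<lambda>u. if u \<in> S \<and> u \<noteq> z then \<mu>' (?L (?\<psi> u)) (x (?\<psi> u)) * \<eta>' (?\<psi> u) else 0))"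
  have Ls: "?L s \<in> E" "m (?L s) s = s" if "s \<in> S" for s using lft[OF SF that] by auto
  have mu': "dr_aut (\<mu>' (?L s))" if "s \<in> S" for s
    unfolding \<mu>'_def using dr_inv ge_mu[OF GE Ls(1)[OF that]] by blast
  have mu: "dr_aut (\<mu> (?L s))" if "s \<in> S" for s
    using ge_mu[OF GE Ls(1)[OF that]] .
  have eta'0: "\<eta>' s \<noteq> 0" if "s \<in> S" "s \<noteq> z" for s
  proof -
    have "\<eta> s \<noteq> 0" using ge_eta[OF GE that] .
    thus ?thesis unfolding \<eta>'_def using dr_eq0[OF mu'[OF that(1), unfolded \<mu>'_def]] by simp
  qed
  have gphi: "\<gamma> x (\<phi> s) = \<mu>' (?L s) (x s) * \<eta>' s" if "s \<in> S" "s \<noteq> z" for x s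
    unfolding \<gamma>_def using phi_S[OF SF PA that(1)] phi_nz[OF SF PA that] psi_phi[OF SF PA that(1)] by simp
  have gout: "\<gamma> x u = 0" if "u \<notin> S \<or> u = z" for x u
    unfolding \<gamma>_def using that by auto
  have uphi: "u = \<phi> (?\<psi> u) \<and> ?\<psi> u \<in> S \<and> ?\<psi> u \<noteq> z" if "u \<in> S" "u \<noteq> z" for u
    using phi_psi[OF SF PA that(1)] psi_S[OF SF PA that(1)] psi_nz[OF SF PA that] by simp
  have gcar: "\<gamma> x \<in> Rcarrier z S" for x
    unfolding Rcarrier_def using gout by blast
  have KB: "\<mu>' (?L s) (d1 * \<alpha> s d2 * \<xi> s t) * \<eta>' (m s t)
      = \<mu>' (?L s) d1 * \<eta>' s * \<alpha> (\<phi> s) (\<mu>' (?L t) d2 * \<eta>' t) * \<xi> (\<phi> s) (\<phi> t)"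
    if s: "s \<in> S" "s \<noteq> z" and t: "t \<in> S" "t \<noteq> z" and st: "m s t \<noteq> z" for s t d1 d2
  proof -
    have stS: "m s t \<in> S" using sf_closed[OF SF s(1) t(1)] .
    have ps: "\<phi> s \<in> S" "\<phi> s \<noteq> z" using phi_S[OF SF PA s(1)] phi_nz[OF SF PA s] by auto
    have RL: "rgt m E s = ?L t" using prod_mid[OF SF s(1) t(1) st] .
    have sRs: "m (m (?L s) s) (rgt m E s) = s" using Ls[OF s(1)] rgt[OF SF s(1)] by simp
    have H1: "\<mu> (?L s) (\<alpha> (\<phi> s) d) = rho (\<eta> s) (\<alpha> s (\<mu> (?L t) d))" for d
      using fun_cong[OF AE1[OF _ Ls(1)[OF s(1)] conjunct1[OF rgt[OF SF s(1)]] sRs], of d] s RL by simp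
    have H2: "\<mu> (?L s) (\<xi> (\<phi> s) (\<phi> t)) = \<eta> s * \<alpha> s (\<eta> t) * \<xi> s t * inverse (\<eta> (m s t))"
      using AE2[OF _ _ Ls(1)[OF s(1)] Ls(2)[OF s(1)] st] s t by simp
    have Lst: "?L (m s t) = ?L s" using lft_prod[OF SF s(1) t(1) st] .
    show ?thesis
      unfolding \<mu>'_def \<eta>'_def Lst
      using algB[OF mu[OF s(1)] mu[OF t(1)] coc_aut[OF C s] coc_aut[OF C ps]
          ge_eta[OF GE s] ge_eta[OF GE t] ge_eta[OF GE stS st] H1 H2, of d1 d2]
      by simp
  qed
  have ge': "group_elt z E S \<mu>' \<eta>'"
    unfolding group_elt_def
  proof (intro conjI ballI)
    fix e assume "e \<in> E" thus "dr_aut (\<mu>' e)" unfolding \<mu>'_def using dr_inv ge_mu[OF GE] by blast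
  next
    fix s assume s: "s \<in> S - {z}" thus "\<eta>' s \<noteq> 0" using eta'0 by blast
  qed
  have single: "\<gamma> (Rsingle s d) = Rsingle (\<phi> s) (\<mu>' e d * \<eta>' s)"
    if s: "s \<in> S - {z}" and e: "e \<in> E" and es: "m e s = s" for s e d
  proof
    fix u
    have eL: "e = ?L s" using lft_uniq[OF SF _ _ e es] s by auto
    show "\<gamma> (Rsingle s d) u = Rsingle (\<phi> s) (\<mu>' e d * \<eta>' s) u"
    proof (cases "u \<in> S \<and> u \<noteq> z")
      case True
      hence U: "u = \<phi> (?\<psi> u)" "?\<psi> u \<in> S" "?\<psi> u \<noteq> z" using uphi by auto
      show ?thesis
      proof (cases "?\<psi> u = s")
        case True
        thus ?thesis using gphi[of s "Rsingle s d"] s U(1) eL unfolding Rsingle_def by auto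
      next
        case False
        have "u \<noteq> \<phi> s" using False psi_phi[OF SF PA] s by auto
        moreover have "\<gamma> (Rsingle s d) u = 0"
          using gphi[OF U(2,3), of "Rsingle s d"] U(1) False dr_zero[OF mu'[OF U(2)]]
          unfolding Rsingle_def by simp
        ultimately show ?thesis unfolding Rsingle_def by simp
      qed
    next
      case False
      have "u \<noteq> \<phi> s" using False phi_S[OF SF PA] phi_nz[OF SF PA] s by auto
      thus ?thesis using gout False unfolding Rsingle_def by simp
    qed
  qed
  have eta1: "\<eta> e = 1" if e: "e \<in> E" for e
  proof -
    have eS: "e \<in> S - {z}" using sf_ES[OF SF e] sf_Enz[OF SF e] by auto
    have ee: "m e e = e" using sf_Eidem[OF SF e] .
    have "\<mu> e (\<xi> (\<phi> e) (\<phi> e)) = \<eta> e * \<alpha> e (\<eta> e) * \<xi> e e * inverse (\<eta> (m e e))"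
      using AE2[OF eS eS e ee] ee sf_Enz[OF SF e] by simp
    moreover have "\<xi> (\<phi> e) (\<phi> e) = 1" "\<xi> e e = 1" "\<alpha> e = id"
      using N phi_E[OF SF PA e] e unfolding normal_cocycle_def by auto
    ultimately have "1 = \<eta> e * \<eta> e * inverse (\<eta> e)" using dr_one[OF ge_mu[OF GE e]] ee by simp
    also have "\<dots> = \<eta> e" using ge_eta[OF GE] eS by (simp add: mult.assoc)
    finally show ?thesis by simp
  qed
  have gE: "\<gamma> (Rsingle e 1) = Rsingle (\<phi> e) 1" if e: "e \<in> E" for e
  proof -
    have eS: "e \<in> S - {z}" using sf_ES[OF SF e] sf_Enz[OF SF e] by auto
    have "\<gamma> (Rsingle e 1) = Rsingle (\<phi> e) (\<mu>' e 1 * \<eta>' e)"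
      using single[OF eS e sf_Eidem[OF SF e]] .
    moreover have "\<mu>' e 1 = 1" using dr_one ge' e unfolding group_elt_def by blast
    moreover have "\<eta>' e = 1" unfolding \<eta>'_def using lft_E[OF SF e] eta1[OF e]
        dr_one[OF dr_inv[OF ge_mu[OF GE e]]] by simp
    ultimately show ?thesis by simp
  qed
  have imgE: "\<gamma> ` ((\<lambda>e. Rsingle e 1) ` E) = (\<lambda>e. Rsingle e 1) ` E"
  proof -
    have "\<gamma> ` ((\<lambda>e. Rsingle e 1) ` E) = (\<lambda>e. Rsingle (\<phi> e) 1) ` E"
      unfolding image_image using gE by (rule image_cong[OF refl])
    also have "\<dots> = (\<lambda>e. Rsingle e 1) ` (\<phi> ` E)" unfolding image_image ..
    also have "\<phi> ` E = E" using phi_EE[OF SF PA] .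
    finally show ?thesis .
  qed
  have add: "\<gamma> (Radd x y) = Radd (\<gamma> x) (\<gamma> y)" for x y
  proof
    fix u show "\<gamma> (Radd x y) u = Radd (\<gamma> x) (\<gamma> y) u"
    proof (cases "u \<in> S \<and> u \<noteq> z")
      case True
      hence "?\<psi> u \<in> S" using uphi by blast
      thus ?thesis unfolding \<gamma>_def Radd_def using True dr_add[OF mu'] by (simp add: distrib_right)
    next
      case False thus ?thesis unfolding Radd_def using gout by simp
    qed
  qed
  have inj: "inj_on \<gamma> (Rcarrier z S)"
  proof (rule inj_onI)
    fix x y assume x: "x \<in> Rcarrier z S" and y: "y \<in> Rcarrier z S" and eq: "\<gamma> x = \<gamma> y"
    show "x = y"
    proof
      fix w show "x w = y w"
      proof (cases "w \<in> S \<and> w \<noteq> z")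
        case True
        have "\<mu>' (?L w) (x w) * \<eta>' w = \<mu>' (?L w) (y w) * \<eta>' w"
          using fun_cong[OF eq, of "\<phi> w"] gphi True by simp
        hence "\<mu>' (?L w) (x w) = \<mu>' (?L w) (y w)" using eta'0 True by simp
        thus ?thesis using dr_inj[OF mu'] True by blast
      next
        case False thus ?thesis using x y unfolding Rcarrier_def by auto
      qed
    qed
  qed
  have surj: "\<gamma> ` Rcarrier z S = Rcarrier z S"
  proof
    show "\<gamma> ` Rcarrier z S \<subseteq> Rcarrier z S" using gcar by (rule image_subsetI)
    show "Rcarrier z S \<subseteq> \<gamma> ` Rcarrier z S"
    proof
      fix w :: "'s \<Rightarrow> 'd" assume w: "w \<in> Rcarrier z S"
      define x where "x = (\<lambda>s. if s \<in> S \<and> s \<noteq> z then \<mu> (?L s) (w (\<phi> s) * inverse (\<eta>' s)) else 0)"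
      have xc: "x \<in> Rcarrier z S" unfolding Rcarrier_def x_def by auto
      have "\<gamma> x = w"
      proof
        fix u show "\<gamma> x u = w u"
        proof (cases "u \<in> S \<and> u \<noteq> z")
          case True
          hence U: "u = \<phi> (?\<psi> u)" "?\<psi> u \<in> S" "?\<psi> u \<noteq> z" using uphi by auto
          have "\<gamma> x u = \<mu>' (?L (?\<psi> u)) (x (?\<psi> u)) * \<eta>' (?\<psi> u)"
            using gphi[OF U(2,3)] U(1) by metis
          also have "\<dots> = w u * inverse (\<eta>' (?\<psi> u)) * \<eta>' (?\<psi> u)"
            unfolding x_def using U dr_inv_l[OF mu[OF U(2)]] unfolding \<mu>'_def by simp
          also have "\<dots> = w u" using eta'0[OF U(2,3)] by (simp add: mult.assoc)
          finally show ?thesis .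
        next
          case False thus ?thesis using gout w unfolding Rcarrier_def by auto
        qed
      qed
      thus "w \<in> \<gamma> ` Rcarrier z S" using xc by blast
    qed
  qed
  have mult: "\<gamma> (Rmult m z S \<alpha> \<xi> x y) = Rmult m z S \<alpha> \<xi> (\<gamma> x) (\<gamma> y)" for x y
  proof
    fix u
    let ?P = "\<lambda>u. {(s, t). s \<in> S - {z} \<and> t \<in> S - {z} \<and> m s t = u \<and> u \<noteq> z}"
    have finP: "finite (?P u)" for u
    proof (rule finite_subset)
      show "?P u \<subseteq> S \<times> S" by blast
      show "finite (S \<times> S)" using sf_finite[OF SF] by blast
    qed
    show "\<gamma> (Rmult m z S \<alpha> \<xi> x y) u = Rmult m z S \<alpha> \<xi> (\<gamma> x) (\<gamma> y) u"
    proof (cases "u \<in> S \<and> u \<noteq> z")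
      case False
      have PE: "?P u = {}"
      proof -
        have "p \<notin> ?P u" for p
        proof
          assume "p \<in> ?P u"
          then obtain s t where "p = (s, t)" "s \<in> S" "t \<in> S" "m s t = u" "u \<noteq> z" by blast
          thus False using False sf_closed[OF SF] by blast
        qed
        thus ?thesis by blast
      qed
      have "Rmult m z S \<alpha> \<xi> (\<gamma> x) (\<gamma> y) u = 0" unfolding Rmult_def PE by simp
      thus ?thesis using gout False by simp
    next
      case True
      define v where "v = ?\<psi> u"
      have V: "u = \<phi> v" "v \<in> S" "v \<noteq> z" using uphi[OF conjunct1[OF True] conjunct2[OF True]] v_def by auto
      let ?h = "\<lambda>(s, t). (\<phi> s, \<phi> t)"
      have hinj: "inj_on ?h (?P v)"
      proof (rule inj_onI)
        fix p q assume p: "p \<in> ?P v" and q: "q \<in> ?P v" and eq: "?h p = ?h q"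
        obtain s t where pp: "p = (s, t)" by (cases p)
        obtain s' t' where qq: "q = (s', t')" by (cases q)
        have "\<phi> s = \<phi> s'" "\<phi> t = \<phi> t'" using eq pp qq by auto
        thus "p = q" using phi_inj[OF SF PA] p q pp qq by auto
      qed
      have himg: "?h ` (?P v) = ?P u"
      proof
        show "?h ` (?P v) \<subseteq> ?P u"
        proof
          fix p assume "p \<in> ?h ` (?P v)"
          then obtain s t where st: "(s, t) \<in> ?P v" "p = (\<phi> s, \<phi> t)" by auto
          have "\<phi> s \<in> S - {z}" "\<phi> t \<in> S - {z}"
            using st phi_S[OF SF PA] phi_nz[OF SF PA] by auto
          moreover have "m (\<phi> s) (\<phi> t) = u" using st phi_m[OF SF PA] V by auto
          ultimately show "p \<in> ?P u" using st True by auto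
        qed
        show "?P u \<subseteq> ?h ` (?P v)"
        proof
          fix p assume p: "p \<in> ?P u"
          then obtain s' t' where st: "p = (s', t')" "s' \<in> S" "s' \<noteq> z" "t' \<in> S" "t' \<noteq> z" "m s' t' = u"
            by blast
          have S1: "?\<psi> s' \<in> S" "?\<psi> s' \<noteq> z" using uphi st by auto
          have S2: "?\<psi> t' \<in> S" "?\<psi> t' \<noteq> z" using uphi st by auto
          have "\<phi> (m (?\<psi> s') (?\<psi> t')) = \<phi> v"
            using phi_m[OF SF PA S1(1) S2(1)] phi_psi[OF SF PA] st V by simp
          hence "m (?\<psi> s') (?\<psi> t') = v"
            using phi_inj[OF SF PA sf_closed[OF SF S1(1) S2(1)] V(2)] by blast
          hence "(?\<psi> s', ?\<psi> t') \<in> ?P v" using S1 S2 V by auto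
          moreover have "p = ?h (?\<psi> s', ?\<psi> t')" using st phi_psi[OF SF PA] by simp
          ultimately show "p \<in> ?h ` (?P v)" by blast
        qed
      qed
      have "\<gamma> (Rmult m z S \<alpha> \<xi> x y) u
          = \<mu>' (?L v) (\<Sum>(s, t)\<in>?P v. x s * \<alpha> s (y t) * \<xi> s t) * \<eta>' v"
        unfolding V(1) gphi[OF V(2,3)] unfolding Rmult_def by simp
      also have "\<dots> = (\<Sum>(s, t)\<in>?P v. \<mu>' (?L v) (x s * \<alpha> s (y t) * \<xi> s t) * \<eta>' v)"
        unfolding dr_sum[OF mu'[OF V(2)]] sum_distrib_right
        by (rule sum.cong[OF refl]) (simp add: case_prod_beta)
      also have "\<dots> = (\<Sum>(s, t)\<in>?P v. \<gamma> x (\<phi> s) * \<alpha> (\<phi> s) (\<gamma> y (\<phi> t)) * \<xi> (\<phi> s) (\<phi> t))"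
      proof (rule sum.cong[OF refl])
        fix p assume p: "p \<in> ?P v"
        obtain s t where pp: "p = (s, t)" "s \<in> S" "s \<noteq> z" "t \<in> S" "t \<noteq> z" "m s t = v"
          using p by blast
        have st: "m s t \<noteq> z" using pp V by simp
        have Lv: "?L v = ?L s" using lft_prod[OF SF pp(2) pp(4) st] pp(6) by simp
        show "(case p of (s, t) \<Rightarrow> \<mu>' (?L v) (x s * \<alpha> s (y t) * \<xi> s t) * \<eta>' v) =
          (case p of (s, t) \<Rightarrow> \<gamma> x (\<phi> s) * \<alpha> (\<phi> s) (\<gamma> y (\<phi> t)) * \<xi> (\<phi> s) (\<phi> t))"
          using KB[OF pp(2,3) pp(4,5) st, of "x s" "y t"] gphi[OF pp(2,3)] gphi[OF pp(4,5)] pp(1,6) Lv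
          by simp
      qed
      also have "\<dots> = (\<Sum>p\<in>?h ` (?P v). (case p of (s', t') \<Rightarrow> \<gamma> x s' * \<alpha> s' (\<gamma> y t') * \<xi> s' t'))"
        unfolding sum.reindex[OF hinj] by (rule sum.cong[OF refl]) (auto simp: case_prod_beta)
      also have "\<dots> = Rmult m z S \<alpha> \<xi> (\<gamma> x) (\<gamma> y) u"
        unfolding himg Rmult_def ..
      finally show ?thesis .
    qed
  qed
  have R0: "R_aut0 m z E S \<alpha> \<xi> \<gamma>"
    unfolding R_aut0_def R_aut_def bij_betw_def using inj surj add mult imgE by blast
  show ?thesis unfolding ImPhi_def using PA R0 ge' single by blast
qed

theorem mainTheorem6:
  fixes m :: "'s \<Rightarrow> 's \<Rightarrow> 's" and z :: 's and E S :: "'s set"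
    and \<alpha> :: "'s \<Rightarrow> 'd::division_ring \<Rightarrow> 'd" and \<xi> :: "'s \<Rightarrow> 's \<Rightarrow> 'd"
  assumes "sq_free_sg m z E S"
    and "cocycle m z S \<alpha> \<xi>"
    and "normal_cocycle E \<alpha> \<xi>"
  shows "ImPhi m z E S \<alpha> \<xi> = cstab m z E S \<alpha> \<xi>"
proof
  show "ImPhi m z E S \<alpha> \<xi> \<subseteq> cstab m z E S \<alpha> \<xi>"
    using dirA[OF assms(1,2)] by (rule subsetI)
  show "cstab m z E S \<alpha> \<xi> \<subseteq> ImPhi m z E S \<alpha> \<xi>"
    using dirB[OF assms(1,2,3)] by (rule subsetI)
qed

end
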